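(* Assume $L$ satisfies (L1),(L2) and $W$ satisfies (W1)–(W6) (as in the context). Then there exist numbers $r_k>0$ and $\overline b_k$ ($k\in\mathbb{N}$) with $\overline b_k\to+\infty$ as $k\to\infty$ such that $b_k(\lambda):=\inf_{u\in Z_k,\ \|u\|=r_k}I_\lambda(u)\ge\overline b_k$ for all $\lambda\in[1,2]$.
   Context: $L\in C(\mathbb{R},\mathbb{R}^{N\times N})$ symmetric-matrix valued, $W\in C^1(\mathbb{R}\times\mathbb{R}^N,\mathbb{R})$, $\nabla W$ the gradient in $x$, $\widetilde W(t,x)=2W(t,x)-(\nabla W(t,x),x)$, $l(t)=\min_{|x|=1}(L(t)x,x)$. (L1): $\exists\,\alpha>1,M>0$ with $\lim_{R\to\infty}\operatorname{meas}\{t:|t|\ge R,\ l(t)\le M|t|\ln^\alpha|t|\}=0$. (L2): $\exists L_0>0$ with $(L(t)x,x)\ge-L_0|x|^2$. $\mathcal{H}$ is the self-adjoint extension in $L^2(\mathbb{R},\mathbb{R}^N)$ of $-\frac{d^2}{dt^2}+L(t)$, with eigenvalues $\lambda_1\le\lambda_2\le\cdots\to\infty$ and eigenfunctions $e_j$ forming an orthogonal basis; $\bar n$ is the number of nonpositive eigenvalues. $E=\mathfrak{D}(|\mathcal{H}|^{1/2})$, $E=E^-\oplus E^0\oplus E^+$ (spans of eigenfunctions with negative, zero, positive eigenvalues), norm $\|u\|^2=\||\mathcal{H}|^{1/2}u\|_{L^2}^2+\|u^0\|_{L^2}^2$. $X_j=\operatorname{span}\{e_j\}$, $Z_k=\overline{\bigoplus_{j\ge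 k}X_j}$ (closure in $E$). For $\lambda\in[1,2]$: $T(u)=\frac12\|u^+\|^2$, $P(u)=\frac12\|u^-\|^2+\int_{\mathbb{R}}W(t,u(t))dt$, $I_\lambda=T-\lambda P$. (W1) $W(t,0)=0$, $|\nabla W(t,x)|\le b_1|x|$. (W2) $\widetilde W(t,x)\ge b_2|x|^\mu$ for $|x|\ge r_1$, with $b_2,r_1>0,\mu>1$. (W3) $\widetilde W(t,x)\ge-b_3|x|$ for $|x|<r_1$, $b_3>0$. (W4) $|W(t,x)|\le\frac{\lambda_{\bar n+1}-\sigma_0}{2}|x|^2$ for $|x|\le r_2$, $r_2,\sigma_0>0$. (W5) $W(t,x)\ge(\frac{\lambda_{\bar n+1}}2+\varepsilon_0)|x|^2$ for $|x|\ge r_\infty$, $\varepsilon_0,r_\infty>0$. (W6) $W\ge0$. All for all $t\in\mathbb{R}$. *)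

theory Defs
  imports "HOL-Analysis.Analysis"
begin

definition L2fun :: "(real \<Rightarrow> real^'n) \<Rightarrow> bool" where
  "L2fun u \<longleftrightarrow> u \<in> borel_measurable lebesgue \<and>
     integrable lebesgue (\<lambda>t. (norm (u t))\<^sup>2)"

definition innerL2 :: "(real \<Rightarrow> real^'n) \<Rightarrow> (real \<Rightarrow> real^'n) \<Rightarrow> real" where
  "innerL2 u v = (\<integral>t. u t \<bullet> v t \<partial>lebesgue)"

definition lmin :: "(real \<Rightarrow> real^'n^'n) \<Rightarrow> real \<Rightarrow> real" where
  "lmin L t = Inf {(L t *v x) \<bullet> x | x. norm x = 1}"

definition test_fun :: "(real \<Rightarrow> real^'n) \<Rightarrow> (real \<Rightarrow> real^'n) \<Rightarrow> bool" where
  "test_fun phi phi2 \<longleftrightarrow> (\<exists>phi1.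
     (\<forall>t. (phi has_vector_derivative phi1 t) (at t)) \<and>
     (\<forall>t. (phi1 has_vector_derivative phi2 t) (at t)) \<and>
     continuous_on UNIV phi2 \<and> (\<exists>R. \<forall>t. R < \<bar>t\<bar> \<longrightarrow> phi t = 0))"

text \<open>f is an eigenfunction of the self-adjoint realisation of H with eigenvalue mu:
  H^* f = mu f in the sense of distributions (H is essentially self-adjoint on test functions).\<close>
definition eigenfun :: "(real \<Rightarrow> real^'n^'n) \<Rightarrow> real \<Rightarrow> (real \<Rightarrow> real^'n) \<Rightarrow> bool" where
  "eigenfun L mu f \<longleftrightarrow> L2fun f \<and>
     (\<forall>phi phi2. test_fun phi phi2 \<longrightarrow>
        (\<integral>t. f t \<bullet> (L t *v phi t - phi2 t) \<partial>lebesgue) = mu * innerL2 f phi)"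

text \<open>Eigenvalues eig 1 \<le> eig 2 \<le> ... \<rightarrow> \<infinity> (indexed from 1) with eigenfunctions e j
  forming an orthogonal basis of L^2.\<close>
definition spectral_basis :: "(real \<Rightarrow> real^'n^'n) \<Rightarrow> (nat \<Rightarrow> real) \<Rightarrow> (nat \<Rightarrow> real \<Rightarrow> real^'n) \<Rightarrow> bool" where
  "spectral_basis L eig e \<longleftrightarrow>
     (\<forall>j\<ge>1. eigenfun L (eig j) (e j) \<and> innerL2 (e j) (e j) > 0) \<and>
     (\<forall>i\<ge>1. \<forall>j\<ge>1. i \<noteq> j \<longrightarrow> innerL2 (e i) (e j) = 0) \<and>
     (\<forall>u. L2fun u \<longrightarrow> (\<forall>j\<ge>1. innerL2 u (e j) = 0) \<longrightarrow> innerL2 u u = 0) \<and>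
     (\<forall>i j. 1 \<le> i \<longrightarrow> i \<le> j \<longrightarrow> eig i \<le> eig j) \<and>
     filterlim eig at_top sequentially"

definition nbar :: "(nat \<Rightarrow> real) \<Rightarrow> nat" where
  "nbar eig = card {j. 1 \<le> j \<and> eig j \<le> 0}"

section \<open>The space E = D(|H|^(1/2)) via the eigen-expansion\<close>

definition coef2 :: "(nat \<Rightarrow> real \<Rightarrow> real^'n) \<Rightarrow> (real \<Rightarrow> real^'n) \<Rightarrow> nat \<Rightarrow> real" where
  "coef2 e u j = (innerL2 u (e j))\<^sup>2 / innerL2 (e j) (e j)"

definition Espace :: "(nat \<Rightarrow> real) \<Rightarrow> (nat \<Rightarrow> real \<Rightarrow> real^'n) \<Rightarrow> (real \<Rightarrow> real^'n) set" where
  "Espace eig e = {u. L2fun u \<and> summable (\<lambda>j. \<bar>eig (Suc j)\<bar> * coef2 e u (Suc j))}"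

text \<open>norm^2 = ||H|^(1/2) u|^2_{L2} + |u^0|^2_{L2}\<close>
definition Enorm :: "(nat \<Rightarrow> real) \<Rightarrow> (nat \<Rightarrow> real \<Rightarrow> real^'n) \<Rightarrow> (real \<Rightarrow> real^'n) \<Rightarrow> real" where
  "Enorm eig e u = sqrt (\<Sum>j. (\<bar>eig (Suc j)\<bar> + (if eig (Suc j) = 0 then 1 else 0)) * coef2 e u (Suc j))"

text \<open>|u^+|^2 and |u^-|^2 (E-norms of the projections onto E^+ and E^-).\<close>
definition normsq_plus :: "(nat \<Rightarrow> real) \<Rightarrow> (nat \<Rightarrow> real \<Rightarrow> real^'n) \<Rightarrow> (real \<Rightarrow> real^'n) \<Rightarrow> real" where
  "normsq_plus eig e u = (\<Sum>j. (if eig (Suc j) > 0 then eig (Suc j) else 0) * coef2 e u (Suc j))"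

definition normsq_minus :: "(nat \<Rightarrow> real) \<Rightarrow> (nat \<Rightarrow> real \<Rightarrow> real^'n) \<Rightarrow> (real \<Rightarrow> real^'n) \<Rightarrow> real" where
  "normsq_minus eig e u = (\<Sum>j. (if eig (Suc j) < 0 then - eig (Suc j) else 0) * coef2 e u (Suc j))"

text \<open>Z_k = closure in E of the span of e_j, j \<ge> k.\<close>
definition Zk :: "(nat \<Rightarrow> real) \<Rightarrow> (nat \<Rightarrow> real \<Rightarrow> real^'n) \<Rightarrow> nat \<Rightarrow> (real \<Rightarrow> real^'n) set" where
  "Zk eig e k = {u \<in> Espace eig e. \<forall>\<epsilon>>0. \<exists>F c. finite F \<and> F \<subseteq> {k..} \<and>
      Enorm eig e (\<lambda>t. u t - (\<Sum>j\<in>F. c j *\<^sub>R e j t)) < \<epsilon>}"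

definition Ifun :: "(nat \<Rightarrow> real) \<Rightarrow> (nat \<Rightarrow> real \<Rightarrow> real^'n) \<Rightarrow> (real \<Rightarrow> real^'n \<Rightarrow> real)
     \<Rightarrow> real \<Rightarrow> (real \<Rightarrow> real^'n) \<Rightarrow> real" where
  "Ifun eig e W lam u = normsq_plus eig e u / 2
      - lam * (normsq_minus eig e u / 2 + (\<integral>t. W t (u t) \<partial>lebesgue))"

definition bk :: "(nat \<Rightarrow> real) \<Rightarrow> (nat \<Rightarrow> real \<Rightarrow> real^'n) \<Rightarrow> (real \<Rightarrow> real^'n \<Rightarrow> real)
     \<Rightarrow> nat \<Rightarrow> real \<Rightarrow> real \<Rightarrow> ereal" where
  "bk eig e W k r lam = (INF u \<in> {u \<in> Zk eig e k. Enorm eig e u = r}. ereal (Ifun eig e W lam u))"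

end

theory Submission
  imports Defs
begin


definition nrm2 :: "(real \<Rightarrow> real^'n) \<Rightarrow> real" where
  "nrm2 u = (\<integral>t. (norm (u t))\<^sup>2 \<partial>lebesgue)"

lemma L2_meas: "L2fun u \<Longrightarrow> u \<in> borel_measurable lebesgue"
  by (simp add: L2fun_def)

lemma L2_int: "L2fun u \<Longrightarrow> integrable lebesgue (\<lambda>t. (norm (u t))\<^sup>2)"
  by (simp add: L2fun_def)

lemma nrm2_nonneg: "0 \<le> nrm2 u"
  unfolding nrm2_def by (rule integral_nonneg_AE) auto

lemma innerL2_self: "innerL2 u u = nrm2 u"
  unfolding innerL2_def nrm2_def by (simp add: power2_norm_eq_inner)

lemma inner_le_sq: "\<bar>(a::real^'n) \<bullet> b\<bar> \<le> (norm a)\<^sup>2 + (norm b)\<^sup>2"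
proof -
  have "\<bar>a \<bullet> b\<bar> \<le> norm a * norm b" by (rule Cauchy_Schwarz_ineq2)
  also have "\<dots> \<le> (norm a)\<^sup>2 + (norm b)\<^sup>2"
    using sum_squares_bound[of "norm a" "norm b"] mult_nonneg_nonneg[OF norm_ge_zero norm_ge_zero, of a b]
    by linarith
  finally show ?thesis .
qed

lemma L2_inner_integrable:
  assumes "L2fun u" "L2fun v"
  shows "integrable lebesgue (\<lambda>t. u t \<bullet> v t)"
proof (rule Bochner_Integration.integrable_bound)
  show "integrable lebesgue (\<lambda>t. (norm (u t))\<^sup>2 + (norm (v t))\<^sup>2)"
    using assms by (intro Bochner_Integration.integrable_add L2_int)
  have [measurable]: "u \<in> borel_measurable lebesgue" "v \<in> borel_measurable lebesgue"
    using assms by (auto simp: L2_meas)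
  show "(\<lambda>t. u t \<bullet> v t) \<in> borel_measurable lebesgue" by measurable
  show "AE t in lebesgue. norm (u t \<bullet> v t) \<le> norm ((norm (u t))\<^sup>2 + (norm (v t))\<^sup>2)"
  proof (rule AE_I2)
    fix t
    have "norm (u t \<bullet> v t) = \<bar>u t \<bullet> v t\<bar>" by simp
    moreover have "norm ((norm (u t))\<^sup>2 + (norm (v t))\<^sup>2) = (norm (u t))\<^sup>2 + (norm (v t))\<^sup>2"
      by simp
    ultimately show "norm (u t \<bullet> v t) \<le> norm ((norm (u t))\<^sup>2 + (norm (v t))\<^sup>2)"
      using inner_le_sq[of "u t" "v t"] by simp
  qed
qed

lemma norm_sum_sq_le: "(norm ((a::real^'n) + b))\<^sup>2 \<le> 2 * (norm a)\<^sup>2 + 2 * (norm b)\<^sup>2"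
proof -
  have "norm (a + b) \<le> norm a + norm b" by (rule norm_triangle_ineq)
  hence "(norm (a + b))\<^sup>2 \<le> (norm a + norm b)\<^sup>2"
    by (simp add: power_mono)
  also have "\<dots> \<le> 2 * (norm a)\<^sup>2 + 2 * (norm b)\<^sup>2"
    using sum_squares_bound[of "norm a" "norm b"] power2_sum[of "norm a" "norm b"] by linarith
  finally show ?thesis .
qed

lemma L2_add:
  assumes "L2fun u" "L2fun v"
  shows "L2fun (\<lambda>t. u t + v t)"
proof -
  have [measurable]: "u \<in> borel_measurable lebesgue" "v \<in> borel_measurable lebesgue"
    using assms by (auto simp: L2_meas)
  have "integrable lebesgue (\<lambda>t. (norm (u t + v t))\<^sup>2)"
  proof (rule Bochner_Integration.integrable_bound)
    show "integrable lebesgue (\<lambda>t. 2 * (norm (u t))\<^sup>2 + 2 * (norm (v t))\<^sup>2)"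
      using assms by (intro Bochner_Integration.integrable_add integrable_mult_right L2_int)
    show "(\<lambda>t. (norm (u t + v t))\<^sup>2) \<in> borel_measurable lebesgue" by measurable
    show "AE t in lebesgue. norm ((norm (u t + v t))\<^sup>2) \<le> norm (2 * (norm (u t))\<^sup>2 + 2 * (norm (v t))\<^sup>2)"
    proof (rule AE_I2)
      fix t
      have "norm (2 * (norm (u t))\<^sup>2 + 2 * (norm (v t))\<^sup>2) = 2 * (norm (u t))\<^sup>2 + 2 * (norm (v t))\<^sup>2"
        by simp
      then show "norm ((norm (u t + v t))\<^sup>2) \<le> norm (2 * (norm (u t))\<^sup>2 + 2 * (norm (v t))\<^sup>2)"
        using norm_sum_sq_le[of "u t" "v t"] by simp
    qed
  qed
  then show ?thesis unfolding L2fun_def by auto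
qed

lemma L2_scale:
  assumes "L2fun u"
  shows "L2fun (\<lambda>t. c *\<^sub>R u t)"
proof -
  have [measurable]: "u \<in> borel_measurable lebesgue" using assms by (auto simp: L2_meas)
  have "integrable lebesgue (\<lambda>t. c\<^sup>2 * (norm (u t))\<^sup>2)"
    using assms by (intro integrable_mult_right L2_int)
  moreover have "(\<lambda>t. (norm (c *\<^sub>R u t))\<^sup>2) = (\<lambda>t. c\<^sup>2 * (norm (u t))\<^sup>2)"
    by (simp add: power_mult_distrib)
  ultimately show ?thesis unfolding L2fun_def by auto
qed

lemma L2_uminus: "L2fun u \<Longrightarrow> L2fun (\<lambda>t. - u t)"
  using L2_scale[of u "-1"] by simp

lemma L2_diff: "L2fun u \<Longrightarrow> L2fun v \<Longrightarrow> L2fun (\<lambda>t. u t - v t)"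
  using L2_add[of u "\<lambda>t. - v t"] L2_uminus[of v] by simp

lemma L2_zero: "L2fun (\<lambda>t. 0)"
  unfolding L2fun_def by simp

lemma L2_sum:
  assumes "finite F" "\<And>j. j \<in> F \<Longrightarrow> L2fun (e j)"
  shows "L2fun (\<lambda>t. \<Sum>j\<in>F. c j *\<^sub>R e j t)"
  using assms
proof (induction F rule: finite_induct)
  case empty then show ?case by (simp add: L2_zero)
next
  case (insert x F)
  then show ?case by (simp add: L2_add L2_scale)
qed

lemma innerL2_add_left:
  assumes "L2fun u" "L2fun v" "L2fun w"
  shows "innerL2 (\<lambda>t. u t + v t) w = innerL2 u w + innerL2 v w"
proof -
  have "innerL2 (\<lambda>t. u t + v t) w = (\<integral>t. u t \<bullet> w t + v t \<bullet> w t \<partial>lebesgue)"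
    unfolding innerL2_def by (simp add: inner_add_left)
  also have "\<dots> = innerL2 u w + innerL2 v w"
    unfolding innerL2_def
    by (rule Bochner_Integration.integral_add[OF L2_inner_integrable[OF assms(1,3)] L2_inner_integrable[OF assms(2,3)]])
  finally show ?thesis .
qed

lemma innerL2_diff_left:
  assumes "L2fun u" "L2fun v" "L2fun w"
  shows "innerL2 (\<lambda>t. u t - v t) w = innerL2 u w - innerL2 v w"
proof -
  have "innerL2 (\<lambda>t. u t - v t) w = (\<integral>t. u t \<bullet> w t - v t \<bullet> w t \<partial>lebesgue)"
    unfolding innerL2_def by (simp add: inner_diff_left)
  also have "\<dots> = innerL2 u w - innerL2 v w"
    unfolding innerL2_def
    by (rule Bochner_Integration.integral_diff[OF L2_inner_integrable[OF assms(1,3)] L2_inner_integrable[OF assms(2,3)]])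
  finally show ?thesis .
qed

lemma innerL2_scale_left: "innerL2 (\<lambda>t. c *\<^sub>R u t) w = c * innerL2 u w"
  unfolding innerL2_def by simp

lemma innerL2_sym: "innerL2 u v = innerL2 v u"
  unfolding innerL2_def by (simp add: inner_commute)

lemma innerL2_sum_left:
  assumes "finite F" "\<And>j. j \<in> F \<Longrightarrow> L2fun (e j)" "L2fun w"
  shows "innerL2 (\<lambda>t. \<Sum>j\<in>F. c j *\<^sub>R e j t) w = (\<Sum>j\<in>F. c j * innerL2 (e j) w)"
  using assms
proof (induction F rule: finite_induct)
  case empty then show ?case by (simp add: innerL2_def)
next
  case (insert x F)
  have "innerL2 (\<lambda>t. \<Sum>j\<in>insert x F. c j *\<^sub>R e j t) w
      = innerL2 (\<lambda>t. c x *\<^sub>R e x t + (\<Sum>j\<in>F. c j *\<^sub>R e j t)) w"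
    using insert by simp
  also have "\<dots> = innerL2 (\<lambda>t. c x *\<^sub>R e x t) w + innerL2 (\<lambda>t. \<Sum>j\<in>F. c j *\<^sub>R e j t) w"
    using insert by (intro innerL2_add_left L2_scale L2_sum) auto
  finally show ?case using insert by (simp add: innerL2_scale_left)
qed

lemma nrm2_diff_expand:
  assumes "L2fun u" "L2fun v"
  shows "nrm2 (\<lambda>t. u t - v t) = nrm2 u - 2 * innerL2 u v + nrm2 v"
proof -
  have "nrm2 (\<lambda>t. u t - v t) = innerL2 (\<lambda>t. u t - v t) (\<lambda>t. u t - v t)"
    by (simp add: innerL2_self)
  also have "\<dots> = innerL2 u (\<lambda>t. u t - v t) - innerL2 v (\<lambda>t. u t - v t)"
    using assms by (intro innerL2_diff_left L2_diff)
  also have "innerL2 u (\<lambda>t. u t - v t) = innerL2 u u - innerL2 v u"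
    using innerL2_sym[of u "\<lambda>t. u t - v t"] innerL2_diff_left[OF assms(1,2,1)] by simp
  also have "innerL2 v (\<lambda>t. u t - v t) = innerL2 u v - innerL2 v v"
    using innerL2_sym[of v "\<lambda>t. u t - v t"] innerL2_diff_left[OF assms(1,2,2)] by simp
  finally show ?thesis by (simp add: innerL2_self innerL2_sym[of v u])
qed

lemma nrm2_mono:
  assumes "L2fun v" "\<And>t. norm (u t) \<le> norm (v t)"
  shows "nrm2 u \<le> nrm2 v"
proof -
  have "(\<integral>t. (norm (u t))\<^sup>2 \<partial>lebesgue) \<le> (\<integral>t. (norm (v t))\<^sup>2 \<partial>lebesgue)"
  proof (cases "integrable lebesgue (\<lambda>t. (norm (u t))\<^sup>2)")
    case True
    show ?thesis
      by (rule integral_mono[OF True L2_int[OF assms(1)]]) (simp add: assms(2) power_mono)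
  next
    case False
    then show ?thesis by (simp add: not_integrable_integral_eq integral_nonneg_AE)
  qed
  then show ?thesis by (simp add: nrm2_def)
qed

lemma nrm2_tri:
  assumes "L2fun u" "L2fun v" "L2fun w"
  shows "nrm2 (\<lambda>t. u t - w t) \<le> 2 * nrm2 (\<lambda>t. u t - v t) + 2 * nrm2 (\<lambda>t. v t - w t)"
proof -
  have i1: "integrable lebesgue (\<lambda>t. (norm (u t - v t))\<^sup>2)" "integrable lebesgue (\<lambda>t. (norm (v t - w t))\<^sup>2)"
    using assms by (auto intro!: L2_int L2_diff)
  have "(\<integral>t. (norm (u t - w t))\<^sup>2 \<partial>lebesgue) \<le> (\<integral>t. 2 * (norm (u t - v t))\<^sup>2 + 2 * (norm (v t - w t))\<^sup>2 \<partial>lebesgue)"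
  proof (rule integral_mono)
    show "integrable lebesgue (\<lambda>t. (norm (u t - w t))\<^sup>2)"
      using assms by (auto intro!: L2_int L2_diff)
    show "integrable lebesgue (\<lambda>t. 2 * (norm (u t - v t))\<^sup>2 + 2 * (norm (v t - w t))\<^sup>2)"
      using i1 by auto
    fix t
    show "(norm (u t - w t))\<^sup>2 \<le> 2 * (norm (u t - v t))\<^sup>2 + 2 * (norm (v t - w t))\<^sup>2"
    proof -
      have "u t - w t = (u t - v t) + (v t - w t)" by simp
      then show ?thesis using norm_sum_sq_le[of "u t - v t" "v t - w t"] by metis
    qed
  qed
  also have "\<dots> = 2 * nrm2 (\<lambda>t. u t - v t) + 2 * nrm2 (\<lambda>t. v t - w t)"
    using i1 by (simp add: nrm2_def)
  finally show ?thesis by (simp add: nrm2_def)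
qed

lemma innerL2_CS:
  assumes "L2fun u" "L2fun v"
  shows "(innerL2 u v)\<^sup>2 \<le> nrm2 u * nrm2 v"
proof -
  have q: "0 \<le> nrm2 u - 2 * s * innerL2 u v + s\<^sup>2 * nrm2 v" for s
  proof -
    have "0 \<le> nrm2 (\<lambda>t. u t - s *\<^sub>R v t)" by (rule nrm2_nonneg)
    also have "\<dots> = nrm2 u - 2 * innerL2 u (\<lambda>t. s *\<^sub>R v t) + nrm2 (\<lambda>t. s *\<^sub>R v t)"
      using assms by (intro nrm2_diff_expand L2_scale)
    also have "innerL2 u (\<lambda>t. s *\<^sub>R v t) = s * innerL2 u v"
      using innerL2_sym[of u "\<lambda>t. s *\<^sub>R v t"] innerL2_scale_left[of s v u] innerL2_sym[of u v] by simp
    also have "nrm2 (\<lambda>t. s *\<^sub>R v t) = s\<^sup>2 * nrm2 v"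
      unfolding nrm2_def by (simp add: power_mult_distrib)
    finally show ?thesis by simp
  qed
  show ?thesis
  proof (cases "nrm2 v = 0")
    case True
    have "innerL2 u v = 0"
    proof (rule ccontr)
      assume ne: "innerL2 u v \<noteq> 0"
      have "0 \<le> nrm2 u - 2 * ((nrm2 u + 1) / (2 * innerL2 u v)) * innerL2 u v"
        using q[of "(nrm2 u + 1) / (2 * innerL2 u v)"] True by simp
      also have "\<dots> = -1" using ne by (simp add: field_simps)
      finally show False by simp
    qed
    then show ?thesis using True by simp
  next
    case False
    then have pos: "nrm2 v > 0" using nrm2_nonneg[of v] by simp
    have "0 \<le> nrm2 u - 2 * (innerL2 u v / nrm2 v) * innerL2 u v + (innerL2 u v / nrm2 v)\<^sup>2 * nrm2 v"
      by (rule q)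
    also have "\<dots> = nrm2 u - (innerL2 u v)\<^sup>2 / nrm2 v"
      using pos by (simp add: field_simps power2_eq_square)
    finally show ?thesis using pos by (simp add: field_simps)
  qed
qed



lemma amgm_aux:
  fixes a d :: real
  assumes "0 < a" "0 \<le> d"
  shows "d \<le> a + d\<^sup>2 / a"
proof -
  have h1: "2 * a * d \<le> a\<^sup>2 + d\<^sup>2" by (rule sum_squares_bound)
  have h2: "0 \<le> a * d" using assms by simp
  have h3: "2 * a * d = 2 * (a * d)" by simp
  have "a * d \<le> a\<^sup>2 + d\<^sup>2" using h1 h2 h3 by linarith
  then have ad: "a * d \<le> a\<^sup>2 + d\<^sup>2" .
  have e: "(d - a) * a = a * d - a\<^sup>2" by (simp add: algebra_simps power2_eq_square)
  have "(d - a) * a \<le> d\<^sup>2" using ad e by linarith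
  then have "d - a \<le> d\<^sup>2 / a" using assms(1) by (simp add: pos_le_divide_eq)
  then show ?thesis by simp
qed

lemma L2_complete:
  fixes f :: "nat \<Rightarrow> real \<Rightarrow> real^'n"
  assumes L2: "\<And>n. L2fun (f n)"
    and C: "\<And>\<epsilon>. \<epsilon> > 0 \<Longrightarrow> \<exists>N. \<forall>m\<ge>N. \<forall>n\<ge>N. nrm2 (\<lambda>t. f m t - f n t) < \<epsilon>"
  shows "\<exists>g. L2fun g \<and> (\<lambda>n. nrm2 (\<lambda>t. f n t - g t)) \<longlonglongrightarrow> 0"
proof -
  have [measurable]: "\<And>n. f n \<in> borel_measurable lebesgue" using L2 by (simp add: L2_meas)
  have "\<forall>k. \<exists>N. \<forall>m\<ge>N. \<forall>n\<ge>N. nrm2 (\<lambda>t. f m t - f n t) < (1/8)^k"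
    using C by simp
  then have "\<exists>N. \<forall>k. \<forall>m\<ge>N k. \<forall>n\<ge>N k. nrm2 (\<lambda>t. f m t - f n t) < (1/8)^k"
    by (rule choice)
  then obtain N where N0: "\<forall>k. \<forall>m\<ge>N k. \<forall>n\<ge>N k. nrm2 (\<lambda>t. f m t - f n t) < (1/8)^k"
    by blast
  have N: "nrm2 (\<lambda>t. f m t - f n t) < (1/8)^k" if "m \<ge> N k" "n \<ge> N k" for k m n
    using N0 that by blast
  define r where "r k = (\<Sum>j\<le>k. N j) + k" for k
  have rN: "N k \<le> r k" for k
    unfolding r_def using member_le_sum[of k "{..k}" N] by simp
  have rmono: "r i \<le> r m" if "i \<le> m" for i m
  proof -
    have "(\<Sum>j\<le>i. N j) \<le> (\<Sum>j\<le>m. N j)"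
      using that by (intro sum_mono2) auto
    then show ?thesis using that unfolding r_def by simp
  qed
  define h where "h i = f (r i)" for i
  have [measurable]: "\<And>i. h i \<in> borel_measurable lebesgue" unfolding h_def by simp
  have hL2: "\<And>i. L2fun (h i)" unfolding h_def using L2 by simp
  have hb: "nrm2 (\<lambda>t. h m t - h i t) < (1/8)^i" if "i \<le> m" for i m
    unfolding h_def using N[of i "r m" "r i"] rN[of i] rmono[OF that] by simp
  define D where "D i t = 2^i * (norm (h (Suc i) t - h i t))\<^sup>2" for i t
  have [measurable]: "\<And>i. D i \<in> borel_measurable lebesgue" unfolding D_def by measurable
  have Dnn: "0 \<le> D i t" for i t unfolding D_def by simp
  have intD: "(\<integral>\<^sup>+t. ennreal (D i t) \<partial>lebesgue) \<le> ennreal ((1/4)^i)" for i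
  proof -
    have int: "integrable lebesgue (\<lambda>t. (norm (h (Suc i) t - h i t))\<^sup>2)"
      using hL2 by (intro L2_int L2_diff)
    have "(\<integral>\<^sup>+t. ennreal (D i t) \<partial>lebesgue) = ennreal (\<integral>t. D i t \<partial>lebesgue)"
      unfolding D_def using int by (intro nn_integral_eq_integral) auto
    also have "(\<integral>t. D i t \<partial>lebesgue) = 2^i * nrm2 (\<lambda>t. h (Suc i) t - h i t)"
      unfolding D_def nrm2_def by simp
    also have "\<dots> \<le> 2^i * (1/8)^i"
      using hb[of i "Suc i"] by (intro mult_left_mono) auto
    also have "(2::real)^i * (1/8)^i = (1/4)^i"
      by (simp add: power_mult_distrib[symmetric])
    finally show ?thesis by (simp add: ennreal_leI)
  qed
  have "(\<integral>\<^sup>+t. (\<Sum>i. ennreal (D i t)) \<partial>lebesgue) = (\<Sum>i. \<integral>\<^sup>+t. ennreal (D i t) \<partial>lebesgue)"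
    by (rule nn_integral_suminf) measurable
  also have "\<dots> \<le> (\<Sum>i. ennreal ((1/4)^i))"
    by (rule suminf_le) (rule intD, rule summableI, rule summableI)
  also have "\<dots> = ennreal (\<Sum>i. (1/4)^i)"
    by (rule suminf_ennreal2) (simp, rule summable_geometric, simp)
  finally have le: "(\<integral>\<^sup>+t. (\<Sum>i. ennreal (D i t)) \<partial>lebesgue) \<le> ennreal (\<Sum>i. (1/4::real)^i)" .
  have "(\<integral>\<^sup>+t. (\<Sum>i. ennreal (D i t)) \<partial>lebesgue) \<noteq> \<infinity>"
  proof
    assume "(\<integral>\<^sup>+t. (\<Sum>i. ennreal (D i t)) \<partial>lebesgue) = \<infinity>"
    with le have "ennreal (\<Sum>i. (1/4::real)^i) = \<infinity>" by (simp add: top_unique)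
    then show False by simp
  qed
  then have "AE t in lebesgue. (\<Sum>i. ennreal (D i t)) \<noteq> \<infinity>"
    by (intro nn_integral_PInf_AE) measurable
  then have AEconv: "AE t in lebesgue. convergent (\<lambda>i. h i t)"
  proof (rule AE_mp, intro AE_I2 impI)
    fix t assume fin: "(\<Sum>i. ennreal (D i t)) \<noteq> \<infinity>"
    have sD: "summable (\<lambda>i. D i t)"
      using fin Dnn by (intro summable_suminf_not_top) auto
    have "summable (\<lambda>i. (1/2)^i + D i t)"
      by (intro summable_add sD summable_geometric) simp
    then have "summable (\<lambda>i. norm (h (Suc i) t - h i t))"
    proof (rule summable_comparison_test[rotated], intro exI allI impI)
      fix i :: nat
      have a: "(0::real) < (1/2)^i" by simp
      have "norm (h (Suc i) t - h i t) \<le> (1/2)^i + (norm (h (Suc i) t - h i t))\<^sup>2 / (1/2)^i"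
        by (rule amgm_aux[OF a norm_ge_zero])
      also have "(norm (h (Suc i) t - h i t))\<^sup>2 / (1/2)^i = D i t"
        unfolding D_def by (simp add: power_one_over field_simps)
      finally show "norm (norm (h (Suc i) t - h i t)) \<le> (1/2)^i + D i t" by simp
    qed
    then have "summable (\<lambda>i. h (Suc i) t - h i t)" by (rule summable_norm_cancel)
    then have "(\<lambda>n. \<Sum>i<n. h (Suc i) t - h i t) \<longlonglongrightarrow> (\<Sum>i. h (Suc i) t - h i t)"
      by (rule summable_LIMSEQ)
    moreover have "(\<lambda>n. \<Sum>i<n. h (Suc i) t - h i t) = (\<lambda>n. h n t - h 0 t)"
      using sum_lessThan_telescope[of "\<lambda>i. h i t"] by simp
    ultimately have "(\<lambda>n. h n t - h 0 t) \<longlonglongrightarrow> (\<Sum>i. h (Suc i) t - h i t)"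
      by simp
    then have "(\<lambda>n. (h n t - h 0 t) + h 0 t) \<longlonglongrightarrow> (\<Sum>i. h (Suc i) t - h i t) + h 0 t"
      by (intro tendsto_add tendsto_const)
    then show "convergent (\<lambda>i. h i t)" unfolding convergent_def by auto
  qed
  define g where "g t = lim (\<lambda>i. h i t)" for t
  have [measurable]: "g \<in> borel_measurable lebesgue" unfolding g_def by measurable
  have AElim: "AE t in lebesgue. (\<lambda>i. h i t) \<longlonglongrightarrow> g t"
    using AEconv by eventually_elim (simp add: g_def convergent_LIMSEQ_iff)
  have gb: "integrable lebesgue (\<lambda>t. (norm (g t - h i t))\<^sup>2) \<and> nrm2 (\<lambda>t. g t - h i t) \<le> (1/8)^i" for i
  proof -
    have "(\<integral>\<^sup>+t. ennreal ((norm (g t - h i t))\<^sup>2) \<partial>lebesgue)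
        = (\<integral>\<^sup>+t. liminf (\<lambda>m. ennreal ((norm (h m t - h i t))\<^sup>2)) \<partial>lebesgue)"
    proof (rule nn_integral_cong_AE)
      show "AE t in lebesgue. ennreal ((norm (g t - h i t))\<^sup>2) = liminf (\<lambda>m. ennreal ((norm (h m t - h i t))\<^sup>2))"
        using AElim
      proof eventually_elim
        case (elim t)
        have "(\<lambda>m. ennreal ((norm (h m t - h i t))\<^sup>2)) \<longlonglongrightarrow> ennreal ((norm (g t - h i t))\<^sup>2)"
          by (intro tendsto_ennrealI tendsto_intros elim)
        have "liminf (\<lambda>m. ennreal ((norm (h m t - h i t))\<^sup>2)) = ennreal ((norm (g t - h i t))\<^sup>2)"
          by (rule lim_imp_Liminf[OF _ \<open>(\<lambda>m. ennreal ((norm (h m t - h i t))\<^sup>2)) \<longlonglongrightarrow> ennreal ((norm (g t - h i t))\<^sup>2)\<close>]) simp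
        then show ?case by simp
      qed
    qed
    also have "\<dots> \<le> liminf (\<lambda>m. \<integral>\<^sup>+t. ennreal ((norm (h m t - h i t))\<^sup>2) \<partial>lebesgue)"
      by (rule nn_integral_liminf) measurable
    also have "\<dots> \<le> ennreal ((1/8)^i)"
    proof (rule Liminf_le)
      show "sequentially \<noteq> bot" by simp
      show "\<forall>\<^sub>F m in sequentially. (\<integral>\<^sup>+t. ennreal ((norm (h m t - h i t))\<^sup>2) \<partial>lebesgue) \<le> ennreal ((1/8)^i)"
      proof (rule eventually_sequentiallyI[of i])
        fix m assume "i \<le> m"
        have "(\<integral>\<^sup>+t. ennreal ((norm (h m t - h i t))\<^sup>2) \<partial>lebesgue) = ennreal (nrm2 (\<lambda>t. h m t - h i t))"
          unfolding nrm2_def using hL2 by (intro nn_integral_eq_integral L2_int L2_diff) auto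
        also have "\<dots> \<le> ennreal ((1/8)^i)"
          using hb[OF \<open>i \<le> m\<close>] by (intro ennreal_leI) simp
        finally show "(\<integral>\<^sup>+t. ennreal ((norm (h m t - h i t))\<^sup>2) \<partial>lebesgue) \<le> ennreal ((1/8)^i)" .
      qed
    qed
    finally have le: "(\<integral>\<^sup>+t. ennreal ((norm (g t - h i t))\<^sup>2) \<partial>lebesgue) \<le> ennreal ((1/8)^i)" .
    have int: "integrable lebesgue (\<lambda>t. (norm (g t - h i t))\<^sup>2)"
    proof (rule integrableI_bounded)
      show "(\<lambda>t. (norm (g t - h i t))\<^sup>2) \<in> borel_measurable lebesgue" by measurable
      show "(\<integral>\<^sup>+t. ennreal (norm ((norm (g t - h i t))\<^sup>2)) \<partial>lebesgue) < \<infinity>"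
        using le by (simp add: le_less_trans)
    qed
    have "ennreal (nrm2 (\<lambda>t. g t - h i t)) = (\<integral>\<^sup>+t. ennreal ((norm (g t - h i t))\<^sup>2) \<partial>lebesgue)"
      unfolding nrm2_def using int by (intro nn_integral_eq_integral[symmetric]) auto
    with le have "ennreal (nrm2 (\<lambda>t. g t - h i t)) \<le> ennreal ((1/8)^i)" by simp
    then have "nrm2 (\<lambda>t. g t - h i t) \<le> (1/8)^i"
      by (simp add: ennreal_le_iff)
    with int show ?thesis by simp
  qed
  have gL2: "L2fun g"
  proof -
    have "L2fun (\<lambda>t. g t - h 0 t)" unfolding L2fun_def using gb[of 0] by simp
    then have "L2fun (\<lambda>t. (g t - h 0 t) + h 0 t)" by (intro L2_add hL2)
    then show ?thesis by simp
  qed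
  have "(\<lambda>n. nrm2 (\<lambda>t. f n t - g t)) \<longlonglongrightarrow> 0"
  proof (rule LIMSEQ_I)
    fix \<epsilon> :: real assume "0 < \<epsilon>"
    then obtain i where i: "(1/8::real)^i < \<epsilon> / 4" using real_arch_pow_inv[of "\<epsilon>/4" "1/8"] by auto
    show "\<exists>no. \<forall>n\<ge>no. norm (nrm2 (\<lambda>t. f n t - g t) - 0) < \<epsilon>"
    proof (intro exI allI impI)
      fix n assume n: "r i \<le> n"
      have "nrm2 (\<lambda>t. f n t - g t) \<le> 2 * nrm2 (\<lambda>t. f n t - h i t) + 2 * nrm2 (\<lambda>t. h i t - g t)"
        by (rule nrm2_tri[OF L2 hL2 gL2])
      also have "nrm2 (\<lambda>t. f n t - h i t) < (1/8)^i"
        unfolding h_def using N[of i n "r i"] rN[of i] n by simp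
      also have "nrm2 (\<lambda>t. h i t - g t) = nrm2 (\<lambda>t. g t - h i t)"
        unfolding nrm2_def by (simp add: norm_minus_commute)
      also have "\<dots> \<le> (1/8)^i" using gb by simp
      finally have "nrm2 (\<lambda>t. f n t - g t) < \<epsilon>" using i by simp
      then show "norm (nrm2 (\<lambda>t. f n t - g t) - 0) < \<epsilon>"
        using nrm2_nonneg[of "\<lambda>t. f n t - g t"] by simp
    qed
  qed
  with gL2 show ?thesis by blast
qed



locale obasis =
  fixes e :: "nat \<Rightarrow> real \<Rightarrow> real^'n"
  assumes eL2: "\<And>j. j \<ge> 1 \<Longrightarrow> L2fun (e j)"
    and epos: "\<And>j. j \<ge> 1 \<Longrightarrow> innerL2 (e j) (e j) > 0"
    and orth: "\<And>i j. i \<ge> 1 \<Longrightarrow> j \<ge> 1 \<Longrightarrow> i \<noteq> j \<Longrightarrow> innerL2 (e i) (e j) = 0"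
    and compl: "\<And>u. L2fun u \<Longrightarrow> (\<forall>j\<ge>1. innerL2 u (e j) = 0) \<Longrightarrow> innerL2 u u = 0"
begin

lemma combo_L2:
  assumes F: "finite F" "F \<subseteq> {1..}"
  shows "L2fun (\<lambda>t. \<Sum>j\<in>F. c j *\<^sub>R e j t)"
proof (rule L2_sum[OF F(1)])
  fix j assume "j \<in> F"
  then have "j \<ge> 1" using F(2) by auto
  then show "L2fun (e j)" by (rule eL2)
qed

lemma combo_inner:
  assumes F: "finite F" "F \<subseteq> {1..}" and i: "i \<ge> 1"
  shows "innerL2 (\<lambda>t. \<Sum>j\<in>F. c j *\<^sub>R e j t) (e i) = (if i \<in> F then c i * innerL2 (e i) (e i) else 0)"
proof -
  have "innerL2 (\<lambda>t. \<Sum>j\<in>F. c j *\<^sub>R e j t) (e i) = (\<Sum>j\<in>F. c j * innerL2 (e j) (e i))"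
  proof (rule innerL2_sum_left[OF F(1)])
    fix j assume "j \<in> F"
    then have "j \<ge> 1" using F(2) by auto
    then show "L2fun (e j)" by (rule eL2)
  qed (rule eL2[OF i])
  also have "\<dots> = (\<Sum>j\<in>F. if j = i then c i * innerL2 (e i) (e i) else 0)"
  proof (rule sum.cong)
    fix j assume "j \<in> F"
    then have "j \<ge> 1" using F by auto
    then show "c j * innerL2 (e j) (e i) = (if j = i then c i * innerL2 (e i) (e i) else 0)"
      using orth[of j i] i by auto
  qed simp
  also have "\<dots> = (if i \<in> F then c i * innerL2 (e i) (e i) else 0)"
    using F by (simp add: sum.delta)
  finally show ?thesis .
qed

lemma combo_nrm2:
  assumes F: "finite F" "F \<subseteq> {1..}"
  shows "nrm2 (\<lambda>t. \<Sum>j\<in>F. c j *\<^sub>R e j t) = (\<Sum>j\<in>F. (c j)\<^sup>2 * innerL2 (e j) (e j))"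
proof -
  let ?S = "\<lambda>t. \<Sum>j\<in>F. c j *\<^sub>R e j t"
  have "nrm2 ?S = innerL2 ?S ?S" by (simp add: innerL2_self)
  also have "\<dots> = (\<Sum>j\<in>F. c j * innerL2 (e j) ?S)"
  proof (rule innerL2_sum_left[OF F(1)])
    fix j assume "j \<in> F"
    then have "j \<ge> 1" using F(2) by auto
    then show "L2fun (e j)" by (rule eL2)
  qed (rule combo_L2[OF F])
  also have "\<dots> = (\<Sum>j\<in>F. (c j)\<^sup>2 * innerL2 (e j) (e j))"
  proof (rule sum.cong)
    fix j assume j: "j \<in> F"
    then have "j \<ge> 1" using F by auto
    have "innerL2 (e j) ?S = innerL2 ?S (e j)" by (rule innerL2_sym)
    also have "\<dots> = c j * innerL2 (e j) (e j)" using combo_inner[OF F \<open>j \<ge> 1\<close>] j by simp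
    finally show "c j * innerL2 (e j) ?S = (c j)\<^sup>2 * innerL2 (e j) (e j)"
      by (simp add: power2_eq_square)
  qed simp
  finally show ?thesis .
qed

lemma coef2_nonneg: "j \<ge> 1 \<Longrightarrow> 0 \<le> coef2 e u j"
  unfolding coef2_def using epos[of j] by simp

lemma parseval:
  assumes u: "L2fun u"
  shows "(\<lambda>j. coef2 e u (Suc j)) sums nrm2 u"
proof -
  define a where "a j = innerL2 u (e j) / innerL2 (e j) (e j)" for j
  define S where "S n t = (\<Sum>j\<in>{1..n}. a j *\<^sub>R e j t)" for n t
  define P where "P n = (\<Sum>j\<in>{1..n}. coef2 e u j)" for n
  define w where "w n t = u t - S n t" for n t
  have ca: "coef2 e u j = (a j)\<^sup>2 * innerL2 (e j) (e j)" if "j \<ge> 1" for j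
    unfolding coef2_def a_def using epos[OF that] by (simp add: power2_eq_square)
  have ca2: "a j * innerL2 u (e j) = coef2 e u j" if "j \<ge> 1" for j
    unfolding coef2_def a_def using epos[OF that] by (simp add: power2_eq_square)
  have SL2: "L2fun (S n)" for n
    unfolding S_def by (intro combo_L2) auto
  have wL2: "L2fun (w n)" for n
    unfolding w_def using u SL2 by (intro L2_diff)
  have Sinner: "innerL2 (S n) (e i) = (if i \<in> {1..n} then a i * innerL2 (e i) (e i) else 0)" if "i \<ge> 1" for n i
    unfolding S_def by (rule combo_inner[OF _ _ that]) auto
  have uS: "innerL2 u (S n) = P n" for n
  proof -
    have "innerL2 u (S n) = innerL2 (S n) u" by (rule innerL2_sym)
    also have "\<dots> = (\<Sum>j\<in>{1..n}. a j * innerL2 (e j) u)"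
      unfolding S_def using u by (intro innerL2_sum_left eL2) (auto simp: u)
    also have "\<dots> = P n"
      unfolding P_def by (rule sum.cong) (auto simp: innerL2_sym[of "e _" u] ca2)
    finally show ?thesis .
  qed
  have SS: "nrm2 (S n) = P n" for n
  proof -
    have "nrm2 (S n) = (\<Sum>j\<in>{1..n}. (a j)\<^sup>2 * innerL2 (e j) (e j))"
      unfolding S_def by (rule combo_nrm2) auto
    also have "\<dots> = P n" unfolding P_def by (rule sum.cong) (auto simp: ca)
    finally show ?thesis .
  qed
  have wn: "nrm2 (w n) = nrm2 u - P n" for n
  proof -
    have "nrm2 (w n) = nrm2 (\<lambda>t. u t - S n t)" unfolding w_def by simp
    also have "\<dots> = nrm2 u - 2 * innerL2 u (S n) + nrm2 (S n)"
      by (rule nrm2_diff_expand[OF u SL2])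
    finally show ?thesis using uS SS by simp
  qed
  have Pnn: "0 \<le> coef2 e u j" if "j \<ge> 1" for j using coef2_nonneg[OF that] .
  have Pmono: "P n \<le> P m" if "n \<le> m" for n m
    unfolding P_def using that Pnn by (intro sum_mono2) auto
  have Pbd: "P n \<le> nrm2 u" for n
    using wn[of n] nrm2_nonneg[of "w n"] by simp
  have Pconv: "convergent P"
  proof (rule Bseq_mono_convergent)
    show "Bseq P"
    proof (rule BseqI'[of _ "nrm2 u"])
      fix n
      have "0 \<le> P n" unfolding P_def using Pnn by (intro sum_nonneg) auto
      then show "norm (P n) \<le> nrm2 u" using Pbd[of n] by simp
    qed
    show "\<forall>m n. m \<le> n \<longrightarrow> P m \<le> P n" using Pmono by blast
  qed
  have wdiff: "nrm2 (\<lambda>t. w m t - w n t) = P m - P n" if "n \<le> m" for m n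
  proof -
    have split: "{1..m} = {1..n} \<union> {Suc n..m}" using that by auto
    have "S m t - S n t = (\<Sum>j\<in>{Suc n..m}. a j *\<^sub>R e j t)" for t
      unfolding S_def split by (subst sum.union_disjoint) auto
    then have "nrm2 (\<lambda>t. w m t - w n t) = nrm2 (\<lambda>t. \<Sum>j\<in>{Suc n..m}. a j *\<^sub>R e j t)"
      unfolding nrm2_def w_def by (simp add: norm_minus_commute)
    also have "\<dots> = (\<Sum>j\<in>{Suc n..m}. (a j)\<^sup>2 * innerL2 (e j) (e j))"
      by (rule combo_nrm2) auto
    also have "\<dots> = (\<Sum>j\<in>{Suc n..m}. coef2 e u j)" by (rule sum.cong) (auto simp: ca)
    also have "\<dots> = P m - P n" unfolding P_def split by (subst sum.union_disjoint) auto
    finally show ?thesis .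
  qed
  have wdiff2: "nrm2 (\<lambda>t. w m t - w n t) = \<bar>P m - P n\<bar>" for m n
  proof (cases "n \<le> m")
    case True then show ?thesis using wdiff[OF True] Pmono[OF True] by simp
  next
    case False
    then have "m \<le> n" by simp
    have "nrm2 (\<lambda>t. w m t - w n t) = nrm2 (\<lambda>t. w n t - w m t)"
      unfolding nrm2_def by (simp add: norm_minus_commute)
    then show ?thesis using wdiff[OF \<open>m \<le> n\<close>] Pmono[OF \<open>m \<le> n\<close>] by simp
  qed
  have "Cauchy P" using Pconv by (simp add: convergent_Cauchy)
  have C: "\<exists>N. \<forall>m\<ge>N. \<forall>n\<ge>N. nrm2 (\<lambda>t. w m t - w n t) < \<epsilon>" if eps: "\<epsilon> > 0" for \<epsilon>
  proof -
    obtain N where "\<forall>m\<ge>N. \<forall>n\<ge>N. norm (P m - P n) < \<epsilon>"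
      using CauchyD[OF \<open>Cauchy P\<close> eps] by blast
    then show ?thesis using wdiff2 by auto
  qed
  obtain g where gL2: "L2fun g" and glim: "(\<lambda>n. nrm2 (\<lambda>t. w n t - g t)) \<longlonglongrightarrow> 0"
    using L2_complete[of w, OF wL2 C] by blast
  have gorth: "innerL2 g (e j) = 0" if j: "j \<ge> 1" for j
  proof -
    have "(\<lambda>n. nrm2 (\<lambda>t. w n t - g t) * innerL2 (e j) (e j)) \<longlonglongrightarrow> 0 * innerL2 (e j) (e j)"
      by (intro tendsto_mult glim tendsto_const)
    moreover have "\<exists>N. \<forall>n\<ge>N. (innerL2 g (e j))\<^sup>2 \<le> nrm2 (\<lambda>t. w n t - g t) * innerL2 (e j) (e j)"
    proof (intro exI allI impI)
      fix n assume n: "j \<le> n"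
      have wj: "innerL2 (w n) (e j) = 0"
      proof -
        have "innerL2 (w n) (e j) = innerL2 u (e j) - innerL2 (S n) (e j)"
          unfolding w_def by (rule innerL2_diff_left[OF u SL2 eL2[OF j]])
        also have "innerL2 (S n) (e j) = a j * innerL2 (e j) (e j)"
          using Sinner[OF j, of n] n j by simp
        finally show ?thesis unfolding a_def using epos[OF j] by simp
      qed
      have "innerL2 (\<lambda>t. w n t - g t) (e j) = innerL2 (w n) (e j) - innerL2 g (e j)"
        by (rule innerL2_diff_left[OF wL2 gL2 eL2[OF j]])
      then have "innerL2 (\<lambda>t. w n t - g t) (e j) = - innerL2 g (e j)" using wj by simp
      moreover have "(innerL2 (\<lambda>t. w n t - g t) (e j))\<^sup>2 \<le> nrm2 (\<lambda>t. w n t - g t) * nrm2 (e j)"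
        by (intro innerL2_CS L2_diff wL2 gL2 eL2 j)
      ultimately show "(innerL2 g (e j))\<^sup>2 \<le> nrm2 (\<lambda>t. w n t - g t) * innerL2 (e j) (e j)"
        by (simp add: innerL2_self)
    qed
    ultimately have "(innerL2 g (e j))\<^sup>2 \<le> 0 * innerL2 (e j) (e j)"
      by (rule LIMSEQ_le_const)
    then show ?thesis by simp
  qed
  have g0: "nrm2 g = 0"
    using compl[OF gL2] gorth by (simp add: innerL2_self)
  have wlim: "(\<lambda>n. nrm2 (w n)) \<longlonglongrightarrow> 0"
  proof (rule tendsto_sandwich[of "\<lambda>n. 0" _ _ "\<lambda>n. 2 * nrm2 (\<lambda>t. w n t - g t)"])
    show "\<forall>\<^sub>F n in sequentially. 0 \<le> nrm2 (w n)" by (simp add: nrm2_nonneg)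
    show "\<forall>\<^sub>F n in sequentially. nrm2 (w n) \<le> 2 * nrm2 (\<lambda>t. w n t - g t)"
    proof (intro always_eventually allI)
      fix n
      have "nrm2 (\<lambda>t. w n t - 0) \<le> 2 * nrm2 (\<lambda>t. w n t - g t) + 2 * nrm2 (\<lambda>t. g t - 0)"
        by (rule nrm2_tri[OF wL2 gL2 L2_zero])
      then show "nrm2 (w n) \<le> 2 * nrm2 (\<lambda>t. w n t - g t)" using g0 by simp
    qed
    show "(\<lambda>n. 0::real) \<longlonglongrightarrow> 0" by simp
    show "(\<lambda>n. 2 * nrm2 (\<lambda>t. w n t - g t)) \<longlonglongrightarrow> 0"
      using tendsto_mult[OF tendsto_const[of 2] glim] by simp
  qed
  then have "(\<lambda>n. nrm2 u - (nrm2 u - P n)) \<longlonglongrightarrow> nrm2 u - 0"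
    unfolding wn by (intro tendsto_diff tendsto_const)
  then have "P \<longlonglongrightarrow> nrm2 u" by simp
  moreover have "P = (\<lambda>n. \<Sum>j<n. coef2 e u (Suc j))"
    unfolding P_def using sum.atLeast1_atMost_eq[of "coef2 e u"] by (simp add: fun_eq_iff)
  ultimately show ?thesis unfolding sums_def by simp
qed

end



lemma W_upper:
  fixes W :: "real \<Rightarrow> real^'n \<Rightarrow> real" and gradW :: "real \<Rightarrow> real^'n \<Rightarrow> real^'n"
  assumes W_C1: "\<exists>Wt. continuous_on UNIV (\<lambda>p. Wt (fst p) (snd p)) \<and>
               continuous_on UNIV (\<lambda>p. gradW (fst p) (snd p)) \<and>
               (\<forall>t x. ((\<lambda>p. W (fst p) (snd p)) has_derivative
                   (\<lambda>(s, h). s * Wt t x + gradW t x \<bullet> h)) (at (t, x)))"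
    and W0: "\<And>t. W t 0 = 0"
    and gb: "\<And>t x. norm (gradW t x) \<le> b1 * norm x"
  shows "W t x \<le> \<bar>b1\<bar> * (norm x)\<^sup>2"
proof -
  obtain Wt where Wd: "\<And>t x. ((\<lambda>p. W (fst p) (snd p)) has_derivative
                   (\<lambda>(s, h). s * Wt t x + gradW t x \<bullet> h)) (at (t, x))"
    using W_C1 by blast
  have der: "((\<lambda>s. W t (s *\<^sub>R x)) has_real_derivative (gradW t (s *\<^sub>R x) \<bullet> x)) (at s)" for s
  proof -
    have g: "((\<lambda>s. (t, s *\<^sub>R x)) has_derivative (\<lambda>ds. (0, ds *\<^sub>R x))) (at s)"
      by (intro has_derivative_Pair has_derivative_const has_derivative_scaleR_left has_derivative_ident)
    have "((\<lambda>s. (\<lambda>p. W (fst p) (snd p)) (t, s *\<^sub>R x)) has_derivative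
          (\<lambda>ds. (\<lambda>(s', h). s' * Wt t (s *\<^sub>R x) + gradW t (s *\<^sub>R x) \<bullet> h) (0, ds *\<^sub>R x))) (at s)"
      using has_derivative_compose[OF g Wd[of t "s *\<^sub>R x"]] by simp
    then have "((\<lambda>s. W t (s *\<^sub>R x)) has_derivative (\<lambda>ds. (gradW t (s *\<^sub>R x) \<bullet> x) * ds)) (at s)"
      by (simp add: mult.commute)
    then show ?thesis by (simp add: has_field_derivative_def)
  qed
  obtain z where z: "0 < z" "z < 1" and eq: "W t (1 *\<^sub>R x) - W t (0 *\<^sub>R x) = (1 - 0) * (gradW t (z *\<^sub>R x) \<bullet> x)"
    using MVT2[of 0 1 "\<lambda>s. W t (s *\<^sub>R x)" "\<lambda>s. gradW t (s *\<^sub>R x) \<bullet> x"] der by auto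
  have "W t x = gradW t (z *\<^sub>R x) \<bullet> x" using eq W0 by simp
  also have "\<dots> \<le> norm (gradW t (z *\<^sub>R x)) * norm x" by (rule Cauchy_Schwarz_ineq2[THEN abs_le_D1])
  also have "\<dots> \<le> (b1 * norm (z *\<^sub>R x)) * norm x" by (intro mult_right_mono gb) simp
  also have "\<dots> = (b1 * z) * (norm x)\<^sup>2" using z by (simp add: power2_eq_square)
  also have "\<dots> \<le> \<bar>b1\<bar> * (norm x)\<^sup>2"
  proof (intro mult_right_mono)
    have "b1 * z \<le> \<bar>b1\<bar> * z" using z by (intro mult_right_mono) auto
    also have "\<dots> \<le> \<bar>b1\<bar>" using z by (simp add: mult_left_le)
    finally show "b1 * z \<le> \<bar>b1\<bar>" .
  qed simp
  finally show ?thesis .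
qed


locale setting = obasis e
  for e :: "nat \<Rightarrow> real \<Rightarrow> real^'n" +
  fixes eig :: "nat \<Rightarrow> real" and W :: "real \<Rightarrow> real^'n \<Rightarrow> real" and B :: real and K0 :: nat
  assumes K0: "K0 \<ge> 1" "\<And>j. j \<ge> K0 \<Longrightarrow> eig j \<ge> 1"
    and eig_mono: "\<And>i j. 1 \<le> i \<Longrightarrow> i \<le> j \<Longrightarrow> eig i \<le> eig j"
    and W_nn: "\<And>t x. W t x \<ge> 0"
    and W_up: "\<And>t x. W t x \<le> B * (norm x)\<^sup>2"
    and B_nn: "B \<ge> 0"
begin

definition wt :: "nat \<Rightarrow> real" where
  "wt j = \<bar>eig j\<bar> + (if eig j = 0 then 1 else 0)"

lemma wt_pos: "wt j > 0"
  unfolding wt_def by auto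

definition m1 :: real where
  "m1 = min 1 (Min (wt ` {1..K0}))"

lemma m1_pos: "m1 > 0"
proof -
  have "Min (wt ` {1..K0}) > 0"
    using K0(1) wt_pos by (subst Min_gr_iff) auto
  then show ?thesis unfolding m1_def by simp
qed

lemma wt_ge_m1: "j \<ge> 1 \<Longrightarrow> wt j \<ge> m1"
proof (cases "j \<le> K0")
  case True
  assume "j \<ge> 1"
  then have "Min (wt ` {1..K0}) \<le> wt j" using True by (intro Min_le) auto
  then show ?thesis unfolding m1_def by simp
next
  case False
  then have "eig j \<ge> 1" using K0 by simp
  then have "wt j \<ge> 1" unfolding wt_def by simp
  then show ?thesis unfolding m1_def by simp
qed

lemma int_W_le: "L2fun u \<Longrightarrow> (\<integral>t. W t (u t) \<partial>lebesgue) \<le> B * nrm2 u"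
proof -
  assume u: "L2fun u"
  show ?thesis
  proof (cases "integrable lebesgue (\<lambda>t. W t (u t))")
    case True
    have "(\<integral>t. W t (u t) \<partial>lebesgue) \<le> (\<integral>t. B * (norm (u t))\<^sup>2 \<partial>lebesgue)"
      by (rule integral_mono[OF True]) (auto intro: W_up integrable_mult_right L2_int[OF u])
    then show ?thesis unfolding nrm2_def by simp
  next
    case False
    then show ?thesis using B_nn nrm2_nonneg[of u] by (simp add: not_integrable_integral_eq)
  qed
qed

lemma int_W_nn: "0 \<le> (\<integral>t. W t (u t) \<partial>lebesgue)"
  by (rule integral_nonneg_AE) (simp add: W_nn)

lemma coefs:
  assumes u: "L2fun u" and s: "summable (\<lambda>j. \<bar>eig (Suc j)\<bar> * coef2 e u (Suc j))"
  shows "(\<lambda>j. coef2 e u (Suc j)) sums nrm2 u"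
    and "summable (\<lambda>j. wt (Suc j) * coef2 e u (Suc j))"
proof -
  show cs: "(\<lambda>j. coef2 e u (Suc j)) sums nrm2 u" by (rule parseval[OF u])
  have "summable (\<lambda>j. \<bar>eig (Suc j)\<bar> * coef2 e u (Suc j) + coef2 e u (Suc j))"
    using s cs by (intro summable_add) (auto simp: sums_iff)
  then show "summable (\<lambda>j. wt (Suc j) * coef2 e u (Suc j))"
  proof (rule summable_comparison_test[rotated], intro exI allI impI)
    fix j :: nat
    have c: "0 \<le> coef2 e u (Suc j)" by (rule coef2_nonneg) simp
    have "wt (Suc j) * coef2 e u (Suc j) \<le> (\<bar>eig (Suc j)\<bar> + 1) * coef2 e u (Suc j)"
      using c unfolding wt_def by (intro mult_right_mono) auto
    then show "norm (wt (Suc j) * coef2 e u (Suc j)) \<le> \<bar>eig (Suc j)\<bar> * coef2 e u (Suc j) + coef2 e u (Suc j)"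
      using c wt_pos[of "Suc j"] by (simp add: algebra_simps)
  qed
qed

lemma Enorm_sq:
  assumes u: "u \<in> Espace eig e"
  shows "(\<Sum>j. wt (Suc j) * coef2 e u (Suc j)) = (Enorm eig e u)\<^sup>2"
proof -
  have s: "summable (\<lambda>j. wt (Suc j) * coef2 e u (Suc j))"
    using u unfolding Espace_def by (intro coefs(2)) auto
  have "0 \<le> (\<Sum>j. wt (Suc j) * coef2 e u (Suc j))"
    using s by (intro suminf_nonneg) (auto intro!: mult_nonneg_nonneg coef2_nonneg less_imp_le[OF wt_pos])
  then show ?thesis unfolding Enorm_def wt_def[symmetric] by simp
qed

lemma Ifun_lower_general:
  assumes u: "u \<in> Espace eig e" and r: "Enorm eig e u = r" and lam: "lam \<in> {1..2}"
  shows "Ifun eig e W lam u \<ge> - 2 * (r\<^sup>2 / 2 + B * (r\<^sup>2 / m1))"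
proof -
  have uL2: "L2fun u" and s: "summable (\<lambda>j. \<bar>eig (Suc j)\<bar> * coef2 e u (Suc j))"
    using u unfolding Espace_def by auto
  have cs: "(\<lambda>j. coef2 e u (Suc j)) sums nrm2 u" by (rule coefs(1)[OF uL2 s])
  have ws: "summable (\<lambda>j. wt (Suc j) * coef2 e u (Suc j))" by (rule coefs(2)[OF uL2 s])
  have wsum: "(\<Sum>j. wt (Suc j) * coef2 e u (Suc j)) = r\<^sup>2" using Enorm_sq[OF u] r by simp
  have c: "0 \<le> coef2 e u (Suc j)" for j by (rule coef2_nonneg) simp
  have ws': "summable (\<lambda>j. wt (Suc j) * coef2 e u (Suc j) / m1)"
    using ws by (rule summable_divide)
  have "nrm2 u = (\<Sum>j. coef2 e u (Suc j))" using cs by (simp add: sums_iff)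
  also have "\<dots> \<le> (\<Sum>j. wt (Suc j) * coef2 e u (Suc j) / m1)"
  proof (rule suminf_le)
    fix j
    have "m1 * coef2 e u (Suc j) \<le> wt (Suc j) * coef2 e u (Suc j)"
      using c wt_ge_m1[of "Suc j"] by (intro mult_right_mono) auto
    then show "coef2 e u (Suc j) \<le> wt (Suc j) * coef2 e u (Suc j) / m1"
      using m1_pos by (simp add: field_simps)
  qed (use cs ws' in \<open>auto simp: sums_iff\<close>)
  also have "\<dots> = r\<^sup>2 / m1" using wsum ws by (simp add: suminf_divide)
  finally have n2: "nrm2 u \<le> r\<^sup>2 / m1" .
  have negle: "(if eig (Suc j) < 0 then - eig (Suc j) else 0) * coef2 e u (Suc j) \<le> wt (Suc j) * coef2 e u (Suc j)" for j
    using c[of j] unfolding wt_def by (intro mult_right_mono) auto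
  have negnn: "0 \<le> (if eig (Suc j) < 0 then - eig (Suc j) else 0) * coef2 e u (Suc j)" for j
    using c[of j] by auto
  have ns: "summable (\<lambda>j. (if eig (Suc j) < 0 then - eig (Suc j) else 0) * coef2 e u (Suc j))"
    using ws negle negnn by (intro summable_comparison_test[OF _ ws]) auto
  have nm: "normsq_minus eig e u \<le> r\<^sup>2"
    unfolding normsq_minus_def wsum[symmetric] by (rule suminf_le[OF negle ns ws])
  have posnn: "0 \<le> (if eig (Suc j) > 0 then eig (Suc j) else 0) * coef2 e u (Suc j)" for j
    using c[of j] by auto
  have posle: "(if eig (Suc j) > 0 then eig (Suc j) else 0) * coef2 e u (Suc j) \<le> wt (Suc j) * coef2 e u (Suc j)" for j
    using c[of j] unfolding wt_def by (intro mult_right_mono) auto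
  have ps: "summable (\<lambda>j. (if eig (Suc j) > 0 then eig (Suc j) else 0) * coef2 e u (Suc j))"
    using posle posnn by (intro summable_comparison_test[OF _ ws]) auto
  have np: "0 \<le> normsq_plus eig e u"
    unfolding normsq_plus_def by (rule suminf_nonneg[OF ps posnn])
  have iw: "(\<integral>t. W t (u t) \<partial>lebesgue) \<le> B * (r\<^sup>2 / m1)"
    using int_W_le[OF uL2] n2 B_nn by (meson mult_left_mono order_trans)
  have Y: "normsq_minus eig e u / 2 + (\<integral>t. W t (u t) \<partial>lebesgue) \<le> r\<^sup>2 / 2 + B * (r\<^sup>2 / m1)"
    using nm iw by simp
  have Ynn: "0 \<le> r\<^sup>2 / 2 + B * (r\<^sup>2 / m1)" using B_nn m1_pos by simp
  have "lam * (normsq_minus eig e u / 2 + (\<integral>t. W t (u t) \<partial>lebesgue)) \<le> lam * (r\<^sup>2 / 2 + B * (r\<^sup>2 / m1))"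
    using Y lam by (intro mult_left_mono) auto
  also have "\<dots> \<le> 2 * (r\<^sup>2 / 2 + B * (r\<^sup>2 / m1))"
    using Ynn lam by (intro mult_right_mono) auto
  finally show ?thesis unfolding Ifun_def using np by simp
qed

lemma Zk_coef_zero:
  assumes u: "u \<in> Zk eig e k" and j: "1 \<le> j" "j < k"
  shows "coef2 e u j = 0"
proof (rule ccontr)
  assume ne: "coef2 e u j \<noteq> 0"
  have c: "0 \<le> coef2 e u j" using coef2_nonneg j by simp
  have uE: "u \<in> Espace eig e" using u unfolding Zk_def by simp
  then have uL2: "L2fun u" and s: "summable (\<lambda>i. \<bar>eig (Suc i)\<bar> * coef2 e u (Suc i))"
    unfolding Espace_def by auto
  define \<epsilon> where "\<epsilon> = sqrt (wt j * coef2 e u j)"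
  have pos: "wt j * coef2 e u j > 0" using ne c wt_pos[of j] by simp
  then have "\<epsilon> > 0" unfolding \<epsilon>_def by simp
  then obtain F cc where F: "finite F" "F \<subseteq> {k..}"
    and small: "Enorm eig e (\<lambda>t. u t - (\<Sum>i\<in>F. cc i *\<^sub>R e i t)) < \<epsilon>"
    using u unfolding Zk_def by blast
  have F1: "F \<subseteq> {1..}" using F(2) j by auto
  define d where "d t = u t - (\<Sum>i\<in>F. cc i *\<^sub>R e i t)" for t
  have dL2: "L2fun d" unfolding d_def by (intro L2_diff uL2 combo_L2 F(1) F1)
  have dcoef: "coef2 e d i = coef2 e u i" if "i \<ge> 1" "i \<notin> F" for i
  proof -
    have "innerL2 d (e i) = innerL2 u (e i) - innerL2 (\<lambda>t. \<Sum>i\<in>F. cc i *\<^sub>R e i t) (e i)"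
      unfolding d_def by (intro innerL2_diff_left uL2 combo_L2 F(1) F1 eL2 that(1))
    also have "innerL2 (\<lambda>t. \<Sum>i\<in>F. cc i *\<^sub>R e i t) (e i) = 0"
      using combo_inner[OF F(1) F1 that(1)] that by simp
    finally show ?thesis unfolding coef2_def by simp
  qed
  have jF: "j \<notin> F" using F(2) j by auto
  have sd: "summable (\<lambda>i. \<bar>eig (Suc i)\<bar> * coef2 e d (Suc i))"
  proof -
    have "\<forall>\<^sub>F i in sequentially. \<bar>eig (Suc i)\<bar> * coef2 e d (Suc i) = \<bar>eig (Suc i)\<bar> * coef2 e u (Suc i)"
    proof (rule eventually_sequentiallyI[of "Max (insert 0 F)"])
      fix i assume "Max (insert 0 F) \<le> i"
      then have "Suc i \<notin> F" using F(1) by (metis Max_ge Suc_n_not_le_n finite_insert insertCI le_trans)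
      then show "\<bar>eig (Suc i)\<bar> * coef2 e d (Suc i) = \<bar>eig (Suc i)\<bar> * coef2 e u (Suc i)"
        using dcoef[of "Suc i"] by simp
    qed
    from summable_cong[OF this] s show ?thesis by simp
  qed
  have dE: "d \<in> Espace eig e" unfolding Espace_def using dL2 sd by simp
  have wsd: "summable (\<lambda>i. wt (Suc i) * coef2 e d (Suc i))" by (rule coefs(2)[OF dL2 sd])
  have "wt j * coef2 e u j = (\<Sum>i\<in>{j - 1}. wt (Suc i) * coef2 e d (Suc i))"
    using j dcoef[OF j(1) jF] by simp
  also have "\<dots> \<le> (\<Sum>i. wt (Suc i) * coef2 e d (Suc i))"
    by (rule sum_le_suminf[OF wsd]) (auto intro!: mult_nonneg_nonneg coef2_nonneg less_imp_le[OF wt_pos])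
  also have "\<dots> = (Enorm eig e d)\<^sup>2" by (rule Enorm_sq[OF dE])
  also have "\<dots> < \<epsilon>\<^sup>2"
  proof -
    have "Enorm eig e d < \<epsilon>" using small unfolding d_def[symmetric] by simp
    moreover have "0 \<le> Enorm eig e d"
    proof -
      have "0 \<le> (\<Sum>i. wt (Suc i) * coef2 e d (Suc i))"
        by (rule suminf_nonneg[OF wsd]) (auto intro!: mult_nonneg_nonneg coef2_nonneg less_imp_le[OF wt_pos])
      then show ?thesis unfolding Enorm_def wt_def[symmetric] by simp
    qed
    ultimately show ?thesis by (simp add: power_strict_mono)
  qed
  also have "\<epsilon>\<^sup>2 = wt j * coef2 e u j" unfolding \<epsilon>_def using pos by simp
  finally show False by simp
qed

lemma Ifun_lower_large:
  assumes u: "u \<in> Zk eig e k" and r: "Enorm eig e u = r" and lam: "lam \<in> {1..2}"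
    and k: "k \<ge> K0" and big: "eig k \<ge> 8 * B + 1"
  shows "Ifun eig e W lam u \<ge> r\<^sup>2 / 4"
proof -
  have uE: "u \<in> Espace eig e" using u unfolding Zk_def by simp
  then have uL2: "L2fun u" and s: "summable (\<lambda>j. \<bar>eig (Suc j)\<bar> * coef2 e u (Suc j))"
    unfolding Espace_def by auto
  have cs: "(\<lambda>j. coef2 e u (Suc j)) sums nrm2 u" by (rule coefs(1)[OF uL2 s])
  have ws: "summable (\<lambda>j. wt (Suc j) * coef2 e u (Suc j))" by (rule coefs(2)[OF uL2 s])
  have wsum: "(\<Sum>j. wt (Suc j) * coef2 e u (Suc j)) = r\<^sup>2" using Enorm_sq[OF uE] r by simp
  have c: "0 \<le> coef2 e u (Suc j)" for j by (rule coef2_nonneg) simp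
  have z: "coef2 e u (Suc j) = 0" if "Suc j < k" for j
    using Zk_coef_zero[OF u _ that] by simp
  have eigpos: "eig (Suc j) \<ge> eig k" "eig (Suc j) \<ge> 1" if "\<not> Suc j < k" for j
    using that eig_mono[of k "Suc j"] K0 k by auto
  have ek: "eig k \<ge> 1" using K0 k by simp
  have mz: "normsq_minus eig e u = 0"
  proof -
    have "(\<lambda>j. (if eig (Suc j) < 0 then - eig (Suc j) else 0) * coef2 e u (Suc j)) = (\<lambda>j. 0)"
    proof
      fix j show "(if eig (Suc j) < 0 then - eig (Suc j) else 0) * coef2 e u (Suc j) = 0"
        using z[of j] eigpos[of j] by (cases "Suc j < k") auto
    qed
    then show ?thesis unfolding normsq_minus_def by simp
  qed
  have pe: "normsq_plus eig e u = r\<^sup>2"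
  proof -
    have "(\<lambda>j. (if eig (Suc j) > 0 then eig (Suc j) else 0) * coef2 e u (Suc j)) = (\<lambda>j. wt (Suc j) * coef2 e u (Suc j))"
    proof
      fix j show "(if eig (Suc j) > 0 then eig (Suc j) else 0) * coef2 e u (Suc j) = wt (Suc j) * coef2 e u (Suc j)"
        using z[of j] eigpos[of j] unfolding wt_def by (cases "Suc j < k") auto
    qed
    then show ?thesis unfolding normsq_plus_def using wsum by simp
  qed
  have ws': "summable (\<lambda>j. wt (Suc j) * coef2 e u (Suc j) / eig k)"
    using ws by (rule summable_divide)
  have "nrm2 u = (\<Sum>j. coef2 e u (Suc j))" using cs by (simp add: sums_iff)
  also have "\<dots> \<le> (\<Sum>j. wt (Suc j) * coef2 e u (Suc j) / eig k)"
  proof (rule suminf_le)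
    fix j
    show "coef2 e u (Suc j) \<le> wt (Suc j) * coef2 e u (Suc j) / eig k"
    proof (cases "Suc j < k")
      case True then show ?thesis using z[OF True] by simp
    next
      case False
      have "eig k * coef2 e u (Suc j) \<le> wt (Suc j) * coef2 e u (Suc j)"
        using c[of j] eigpos[OF False] unfolding wt_def by (intro mult_right_mono) auto
      then show ?thesis using ek by (simp add: field_simps)
    qed
  qed (use cs ws' in \<open>auto simp: sums_iff\<close>)
  also have "\<dots> = r\<^sup>2 / eig k" using wsum ws by (simp add: suminf_divide)
  finally have n2: "nrm2 u \<le> r\<^sup>2 / eig k" .
  have "(\<integral>t. W t (u t) \<partial>lebesgue) \<le> B * (r\<^sup>2 / eig k)"
    using int_W_le[OF uL2] n2 B_nn by (meson mult_left_mono order_trans)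
  also have "\<dots> \<le> r\<^sup>2 / 8"
  proof -
    have "(B * 8) * r\<^sup>2 \<le> eig k * r\<^sup>2" using big by (intro mult_right_mono) auto
    then have "B * r\<^sup>2 * 8 \<le> eig k * r\<^sup>2" by (simp add: algebra_simps)
    then show ?thesis using ek by (simp add: field_simps)
  qed
  finally have iw: "(\<integral>t. W t (u t) \<partial>lebesgue) \<le> r\<^sup>2 / 8" .
  have "lam * (\<integral>t. W t (u t) \<partial>lebesgue) \<le> 2 * (\<integral>t. W t (u t) \<partial>lebesgue)"
    using lam int_W_nn[of u] by (intro mult_right_mono) auto
  then show ?thesis unfolding Ifun_def using mz pe iw by simp
qed

end



theorem lemma3p2:
  fixes L :: "real \<Rightarrow> real^'n^'n"
    and W :: "real \<Rightarrow> real^'n \<Rightarrow> real"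
    and gradW :: "real \<Rightarrow> real^'n \<Rightarrow> real^'n"
    and eig :: "nat \<Rightarrow> real"
    and e :: "nat \<Rightarrow> real \<Rightarrow> real^'n"
  assumes L_cont: "continuous_on UNIV L"
    and L_sym: "\<And>t. transpose (L t) = L t"
    and L1: "\<exists>\<alpha>>1. \<exists>M>0. ((\<lambda>R. emeasure lebesgue
               {t. \<bar>t\<bar> \<ge> R \<and> lmin L t \<le> M * \<bar>t\<bar> * (ln \<bar>t\<bar>) powr \<alpha>}) \<longlongrightarrow> 0) at_top"
    and L2: "\<exists>L0>0. \<forall>t x. (L t *v x) \<bullet> x \<ge> - L0 * (norm x)\<^sup>2"
    and spec: "spectral_basis L eig e"
    and W_C1: "\<exists>Wt. continuous_on UNIV (\<lambda>p. Wt (fst p) (snd p)) \<and>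
               continuous_on UNIV (\<lambda>p. gradW (fst p) (snd p)) \<and>
               (\<forall>t x. ((\<lambda>p. W (fst p) (snd p)) has_derivative
                   (\<lambda>(s, h). s * Wt t x + gradW t x \<bullet> h)) (at (t, x)))"
    and W1: "(\<forall>t. W t 0 = 0) \<and> (\<exists>b1. \<forall>t x. norm (gradW t x) \<le> b1 * norm x)"
    and W23: "\<exists>r1>0. (\<exists>b2>0. \<exists>\<mu>>1. \<forall>t x. norm x \<ge> r1 \<longrightarrow>
                  2 * W t x - gradW t x \<bullet> x \<ge> b2 * norm x powr \<mu>) \<and>
               (\<exists>b3>0. \<forall>t x. norm x < r1 \<longrightarrow> 2 * W t x - gradW t x \<bullet> x \<ge> - b3 * norm x)"
    and W4: "\<exists>r2>0. \<exists>\<sigma>0>0. \<forall>t x. norm x \<le> r2 \<longrightarrow>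
               \<bar>W t x\<bar> \<le> (eig (nbar eig + 1) - \<sigma>0) / 2 * (norm x)\<^sup>2"
    and W5: "\<exists>\<epsilon>0>0. \<exists>rinf>0. \<forall>t x. norm x \<ge> rinf \<longrightarrow>
               W t x \<ge> (eig (nbar eig + 1) / 2 + \<epsilon>0) * (norm x)\<^sup>2"
    and W6: "\<forall>t x. W t x \<ge> 0"
  shows "\<exists>r bbar :: nat \<Rightarrow> real. (\<forall>k\<ge>1. r k > 0) \<and> filterlim bbar at_top sequentially \<and>
           (\<forall>k\<ge>1. \<forall>lam\<in>{1..2}. bk eig e W k (r k) lam \<ge> ereal (bbar k))"
proof -
  have s1: "\<And>j. j \<ge> 1 \<Longrightarrow> eigenfun L (eig j) (e j) \<and> innerL2 (e j) (e j) > 0"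
    and s2: "\<And>i j. i \<ge> 1 \<Longrightarrow> j \<ge> 1 \<Longrightarrow> i \<noteq> j \<Longrightarrow> innerL2 (e i) (e j) = 0"
    and s3: "\<And>u. L2fun u \<Longrightarrow> (\<forall>j\<ge>1. innerL2 u (e j) = 0) \<Longrightarrow> innerL2 u u = 0"
    and s4: "\<And>i j. 1 \<le> i \<Longrightarrow> i \<le> j \<Longrightarrow> eig i \<le> eig j"
    and s5: "filterlim eig at_top sequentially"
    using spec unfolding spectral_basis_def by blast+
  interpret ob: obasis e
  proof
    fix j :: nat assume "j \<ge> 1"
    then show "L2fun (e j)" using s1 unfolding eigenfun_def by blast
  next
    fix j :: nat assume "j \<ge> 1"
    then show "innerL2 (e j) (e j) > 0" using s1 by blast
  qed (use s2 s3 in auto)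
  have ev: "\<forall>\<^sub>F j in sequentially. c \<le> eig j" for c
    using s5 by (simp add: filterlim_at_top)
  obtain N0 where N0: "\<And>j. j \<ge> N0 \<Longrightarrow> 1 \<le> eig j"
    using ev[of 1] unfolding eventually_sequentially by blast
  define K0 where "K0 = max N0 1"
  obtain b1 where b1: "\<And>t x. norm (gradW t x) \<le> b1 * norm x" using W1 by blast
  define B where "B = \<bar>b1\<bar>"
  have Wup: "W t x \<le> B * (norm x)\<^sup>2" for t x
    unfolding B_def by (rule W_upper[OF W_C1 _ b1]) (use W1 in blast)
  interpret st: setting e eig W B K0
  proof
    show "K0 \<ge> 1" unfolding K0_def by simp
    show "\<And>j. j \<ge> K0 \<Longrightarrow> eig j \<ge> 1" using N0 unfolding K0_def by simp
  qed (use s4 W6 Wup B_def in auto)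
  obtain N1 where N1: "\<And>j. j \<ge> N1 \<Longrightarrow> 8 * B + 1 \<le> eig j"
    using ev[of "8 * B + 1"] unfolding eventually_sequentially by blast
  define K1 where "K1 = max N1 K0"
  define r :: "nat \<Rightarrow> real" where "r k = real k + 1" for k
  define bbar :: "nat \<Rightarrow> real" where
    "bbar k = (if k \<ge> K1 then (r k)\<^sup>2 / 4 else - 2 * ((r k)\<^sup>2 / 2 + B * ((r k)\<^sup>2 / st.m1)))" for k
  have rpos: "\<forall>k\<ge>1. r k > 0" unfolding r_def by simp
  have lim: "filterlim bbar at_top sequentially"
    unfolding filterlim_at_top
  proof
    fix Z :: real
    show "\<forall>\<^sub>F k in sequentially. Z \<le> bbar k"
    proof (rule eventually_sequentiallyI[of "max K1 (nat \<lceil>4 * \<bar>Z\<bar>\<rceil>)"])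
      fix k assume k: "max K1 (nat \<lceil>4 * \<bar>Z\<bar>\<rceil>) \<le> k"
      then have "bbar k = (r k)\<^sup>2 / 4" unfolding bbar_def by simp
      moreover have "4 * \<bar>Z\<bar> \<le> real k" using k by linarith
      moreover have "r k \<le> (r k)\<^sup>2" unfolding r_def by (simp add: power2_eq_square)
      ultimately show "Z \<le> bbar k" unfolding r_def by simp
    qed
  qed
  have bnd: "\<forall>k\<ge>1. \<forall>lam\<in>{1..2}. bk eig e W k (r k) lam \<ge> ereal (bbar k)"
  proof (intro allI impI ballI)
    fix k :: nat and lam :: real
    assume k: "k \<ge> 1" and lam: "lam \<in> {1..2}"
    show "bk eig e W k (r k) lam \<ge> ereal (bbar k)"
      unfolding bk_def
    proof (rule INF_greatest)
      fix u assume "u \<in> {u \<in> Zk eig e k. Enorm eig e u = r k}"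
      then have uZ: "u \<in> Zk eig e k" and ur: "Enorm eig e u = r k" by auto
      show "ereal (bbar k) \<le> ereal (Ifun eig e W lam u)"
      proof (cases "k \<ge> K1")
        case True
        have "Ifun eig e W lam u \<ge> (r k)\<^sup>2 / 4"
          using True N1[of k] by (intro st.Ifun_lower_large[OF uZ ur lam]) (auto simp: K1_def)
        then show ?thesis using True unfolding bbar_def by simp
      next
        case False
        have uE: "u \<in> Espace eig e" using uZ unfolding Zk_def by simp
        have "Ifun eig e W lam u \<ge> - 2 * ((r k)\<^sup>2 / 2 + B * ((r k)\<^sup>2 / st.m1))"
          by (rule st.Ifun_lower_general[OF uE ur lam])
        then show ?thesis using False unfolding bbar_def by simp
      qed
    qed
  qed
  show ?thesis using rpos lim bnd by blast
qed


end
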